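(* There are exactly $q^3-q^2-q-1$ points $P$ (not in $\mathcal P_{2,q}$ and not on $m_T$) for which the projection of $\mathcal P_{2,q}$ from $P$ onto $m_T$ is one of the sets $\mathcal S_\theta$, namely $T$ and the points of $\mathrm{Fig}(T)$ not incident with $m_T$. These projection vertices are distributed as follows. (1) If $q$ is even: (a) there is exactly one projection vertex for $\mathcal P_{2,q}$ onto $\mathcal S_1$, namely $T$; (b) for $\theta\in\mathbb{F}_{q^3}^*$ with $N(\theta)\neq1$, there are exactly $q^2+q+1$ projection vertices for $\mathcal P_{2,q}$ onto $\mathcal S_\theta$, namely the points of $\Pi_\theta$. (2) If $q$ is odd: (a) there are no projection vertices for $\mathcal P_{2,q}$ onto $\mathcal S_{-1}$; (b) there are exactly $q^2+q+2$ projection vertices for $\mathcal P_{2,q}$ onto $\mathcal S_1$, namely $T$ and the points of $\Pi_{-1}$; (c) for $\theta\in\mathbb{F}_{q^3}^*$ with $N(\theta)\neq\pm1$, there are exactly $q^2+q+1$ projection vertices for $\mathcal P_{2,q}$ onto $\mathcal S_\theta$, namely the points of $\Pi_{-\theta}$.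
   Context: Let $q$ be a prime power, $\mathbb{F}_{q^3}^*=\mathbb{F}_{q^3}\setminus\{0\}$, $N(x)=x^{q^2+q+1}$. Points of $\mathrm{PG}(2,q^3)$ have homogeneous coordinates $(x,y,z)$ and lines $[a,b,c]$. Let $\phi$ be the collineation $(x,y,z)\mapsto(z^q,x^q,y^q)$ (on lines $[d,e,f]\mapsto[f^q,d^q,e^q]$), whose fixed points form the subplane $\mathcal P_{2,q}=\{(x,x^q,x^{q^2}):x\in\mathbb{F}_{q^3}^*\}$. A point has Type II (resp. III) if its $\phi$-orbit is three collinear (resp. non-collinear) points; a line has Type III if its $\phi$-orbit is three non-concurrent lines. For a Type III point $X$, the Fig-block is $\mathrm{Fig}(X)=\mathcal E_X\cup\mathcal F_X$, where $\mathcal E_X$ is the set of Type II points on the line $X^\phi X^{\phi^2}$ and $\mathcal F_X=\{\ell^\phi\cap\ell^{\phi^2}:\ell\text{ a Type III line through }X\}$. Let $T=(0,0,1)$ and $m_T$ the line $[0,0,1]$. For $\theta\in\mathbb{F}_{q^3}^*$, $\mathcal S_\theta=\{(x\theta,x^q,0):x\in\mathbb{F}_{q^3}^*\}$ and $\Pi_\theta=\{(r\theta^{q+1},r^q,r^{q^2}\theta):r\in\mathbb{F}_{q^3}^*\}$. For a subplane $\mathcal B$ of order $q$ and a point $P$ not in $\mathcal B$ and not on $m_T$, the projection of $\mathcal B$ from $P$ onto $m_T$ is $\{PQ\cap m_T:Q\in\mathcal B\}$; if it equals $\mathcal S_\theta$, then $P$ is called a projection vertex for $\mathcal B$ onto $\mathcal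 S_\theta$. *)

theory Defs
  imports "HOL-Computational_Algebra.Primes"
begin

text \<open>Homogeneous coordinate triples over a finite field 'a (playing the role of GF(q^3)).
  A point (or line) of PG(2,q^3) is represented as the set of all nonzero scalar multiples of
  a nonzero triple.\<close>

type_synonym 'a trip = "'a \<times> 'a \<times> 'a"

definition sc :: "'a::field \<Rightarrow> 'a trip \<Rightarrow> 'a trip" where
  "sc k v = (case v of (x, y, z) \<Rightarrow> (k * x, k * y, k * z))"

definition pt :: "'a::field trip \<Rightarrow> 'a trip set" where
  "pt v = {sc k v | k. k \<noteq> 0}"

text \<open>Points of PG(2,q^3); lines are represented by the same kind of objects
  (line [a,b,c] is pt (a,b,c)).\<close>
definition PG :: "'a::field trip set set" where
  "PG = {pt v | v. v \<noteq> (0, 0, 0)}"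

definition dot :: "'a::field trip \<Rightarrow> 'a trip \<Rightarrow> 'a" where
  "dot u v = (case u of (a, b, c) \<Rightarrow> case v of (x, y, z) \<Rightarrow> a * x + b * y + c * z)"

definition inc :: "'a::field trip set \<Rightarrow> 'a trip set \<Rightarrow> bool" where
  "inc P L = (\<exists>p\<in>P. \<exists>l\<in>L. dot l p = 0)"

definition det3 :: "'a::field trip \<Rightarrow> 'a trip \<Rightarrow> 'a trip \<Rightarrow> 'a" where
  "det3 u v w = (case u of (a, b, c) \<Rightarrow> case v of (d, e, f) \<Rightarrow> case w of (g, h, i) \<Rightarrow>
      a * (e * i - f * h) - b * (d * i - f * g) + c * (d * h - e * g))"

definition dep3 :: "'a::field trip set \<Rightarrow> 'a trip set \<Rightarrow> 'a trip set \<Rightarrow> bool" where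
  "dep3 P Q R = (\<exists>u\<in>P. \<exists>v\<in>Q. \<exists>w\<in>R. det3 u v w = 0)"

text \<open>The collineation phi: (x,y,z) -> (z^q,x^q,y^q); on lines [d,e,f] -> [f^q,d^q,e^q]
  (same formula).\<close>
definition phi :: "nat \<Rightarrow> 'a::field trip set \<Rightarrow> 'a trip set" where
  "phi q S = (\<lambda>(x, y, z). (z ^ q, x ^ q, y ^ q)) ` S"

definition normq :: "nat \<Rightarrow> 'a::field \<Rightarrow> 'a" where
  "normq q x = x ^ (q^2 + q + 1)"

definition subplane :: "nat \<Rightarrow> 'a::field trip set set" where
  "subplane q = {pt (x, x ^ q, x ^ (q^2)) | x. x \<noteq> 0}"

definition typeII_pt :: "nat \<Rightarrow> 'a::field trip set \<Rightarrow> bool" where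
  "typeII_pt q X = (X \<in> PG \<and> X \<noteq> phi q X \<and> X \<noteq> phi q (phi q X) \<and>
      phi q X \<noteq> phi q (phi q X) \<and> dep3 X (phi q X) (phi q (phi q X)))"

definition typeIII :: "nat \<Rightarrow> 'a::field trip set \<Rightarrow> bool" where
  "typeIII q X = (X \<in> PG \<and> \<not> dep3 X (phi q X) (phi q (phi q X)))"

definition E_set :: "nat \<Rightarrow> 'a::field trip set \<Rightarrow> 'a trip set set" where
  "E_set q X = {Y. typeII_pt q Y \<and> dep3 (phi q X) (phi q (phi q X)) Y}"

definition F_set :: "nat \<Rightarrow> 'a::field trip set \<Rightarrow> 'a trip set set" where
  "F_set q X = {Y \<in> PG. \<exists>l. typeIII q l \<and> inc X l \<and>
      inc Y (phi q l) \<and> inc Y (phi q (phi q l))}"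

definition Fig :: "nat \<Rightarrow> 'a::field trip set \<Rightarrow> 'a trip set set" where
  "Fig q X = E_set q X \<union> F_set q X"

definition Tpt :: "'a::field trip set" where
  "Tpt = pt (0, 0, 1)"

definition mT :: "'a::field trip set" where
  "mT = pt (0, 0, 1)"

definition S_set :: "nat \<Rightarrow> 'a::field \<Rightarrow> 'a trip set set" where
  "S_set q \<theta> = {pt (x * \<theta>, x ^ q, 0) | x. x \<noteq> 0}"

definition Pi_set :: "nat \<Rightarrow> 'a::field \<Rightarrow> 'a trip set set" where
  "Pi_set q \<theta> = {pt (r * \<theta> ^ (q + 1), r ^ q, r ^ (q^2) * \<theta>) | r. r \<noteq> 0}"

text \<open>Projection of B from P onto m_T: the points PQ \<inter> m_T for Q in B
  (for P not on m_T, R on m_T is PQ \<inter> m_T iff P, Q, R are collinear).\<close>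
definition projection :: "'a::field trip set set \<Rightarrow> 'a trip set \<Rightarrow> 'a trip set set" where
  "projection B P = {R \<in> PG. inc R mT \<and> (\<exists>Q\<in>B. dep3 P Q R)}"

definition vertices :: "nat \<Rightarrow> 'a::field \<Rightarrow> 'a trip set set" where
  "vertices q \<theta> = {P \<in> PG. P \<notin> subplane q \<and> \<not> inc P mT \<and>
      projection (subplane q) P = S_set q \<theta>}"

end

theory Submission
  imports Defs "HOL-Computational_Algebra.Polynomial"
begin


lemma of_nat_card_zero: "of_nat (card (UNIV::'a::{ring_1,finite} set)) = (0::'a)"
proof -
  have "(\<Sum>y\<in>UNIV. y + 1) = (\<Sum>y\<in>UNIV. (y::'a))"
    by (rule sum.reindex_bij_betw) (auto simp: bij_betw_def inj_on_def image_def intro!: exI[of _ "_ - 1"])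
  then show ?thesis by (simp add: sum.distrib)
qed

lemma pow_card_nonzero: "(x::'a::{field,finite}) \<noteq> 0 \<Longrightarrow> x ^ (card (UNIV::'a set) - 1) = 1"
proof -
  assume x: "x \<noteq> 0"
  let ?U = "UNIV - {0::'a}"
  have "(\<Prod>y\<in>?U. x * y) = (\<Prod>y\<in>?U. y)"
    apply (rule prod.reindex_bij_betw)
    using x apply (auto simp: bij_betw_def inj_on_def image_iff)
    subgoal for y by (cases "y = 0") (auto dest: bspec[of _ _ "y / x"])
    done
  then have "x ^ card ?U * (\<Prod>y\<in>?U. y) = (\<Prod>y\<in>?U. y)" by (simp add: prod.distrib)
  moreover have "(\<Prod>y\<in>?U. y) \<noteq> 0" by (simp)
  ultimately have "x ^ card ?U = 1" by simp
  moreover have "card ?U = card (UNIV::'a set) - 1" by (simp add: card_Diff_singleton)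
  ultimately show ?thesis by simp
qed

lemma pow_card: "(x::'a::{field,finite}) ^ card (UNIV::'a set) = x"
proof (cases "x = 0")
  case True then show ?thesis by (simp add: power_0_left card_gt_0_iff)
next
  case False
  have "card (UNIV::'a set) = Suc (card (UNIV::'a set) - 1)" using finite_UNIV_card_ge_0[where 'a='a] by simp
  then have "x ^ card (UNIV::'a set) = x * x ^ (card (UNIV::'a set) - 1)" by (metis power_Suc)
  then show ?thesis using pow_card_nonzero[OF False] by simp
qed

lemma frob_p:
  assumes "prime p" "of_nat p = (0::'a::comm_ring_1)"
  shows "(x + y :: 'a) ^ p = x ^ p + y ^ p"
proof -
  have p0: "p > 0" using assms(1) prime_gt_0_nat by blast
  have "(x + y) ^ p = (\<Sum>k\<le>p. of_nat (p choose k) * x ^ k * y ^ (p - k))" by (rule binomial_ring)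
  also have "\<dots> = (\<Sum>k\<in>{0,p}. of_nat (p choose k) * x ^ k * y ^ (p - k))"
  proof (rule sum.mono_neutral_right)
    show "\<forall>i\<in>{..p} - {0, p}. of_nat (p choose i) * x ^ i * y ^ (p - i) = 0"
    proof
      fix i assume i: "i \<in> {..p} - {0, p}"
      then have "p dvd (p choose i)" using dvd_choose_prime[of i p] assms(1) by auto
      then obtain m where "p choose i = p * m" by blast
      then show "of_nat (p choose i) * x ^ i * y ^ (p - i) = 0" using assms(2) by simp
    qed
  qed auto
  also have "\<dots> = x ^ p + y ^ p" using p0 by simp
  finally show ?thesis .
qed

definition FF :: "nat \<Rightarrow> 'a::{field,finite} itself \<Rightarrow> bool" where
  "FF q t = (\<exists>p k. prime p \<and> k > 0 \<and> q = p ^ k \<and> card (UNIV::'a set) = q ^ 3)"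

locale ff =
  fixes q :: nat and ty :: "'a::{field,finite} itself"
  assumes FF: "FF q ty"
begin

definition chp :: nat where "chp = (SOME p. \<exists>k. prime p \<and> k > 0 \<and> q = p ^ k \<and> card (UNIV::'a set) = q ^ 3)"
definition chk :: nat where "chk = (SOME k. prime chp \<and> k > 0 \<and> q = chp ^ k \<and> card (UNIV::'a set) = q ^ 3)"

lemma chp_chk: "prime chp" "chk > 0" "q = chp ^ chk" "card (UNIV::'a set) = q ^ 3"
proof -
  have "\<exists>p k. prime p \<and> k > 0 \<and> q = p ^ k \<and> card (UNIV::'a set) = q ^ 3" using FF unfolding FF_def .
  then have "\<exists>k. prime chp \<and> k > 0 \<and> q = chp ^ k \<and> card (UNIV::'a set) = q ^ 3"
    unfolding chp_def by (rule someI_ex)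
  then have "prime chp \<and> chk > 0 \<and> q = chp ^ chk \<and> card (UNIV::'a set) = q ^ 3"
    unfolding chk_def by (rule someI_ex)
  then show "prime chp" "chk > 0" "q = chp ^ chk" "card (UNIV::'a set) = q ^ 3" by auto
qed

lemma cardF: "card (UNIV::'a set) = q ^ 3" using chp_chk by simp

lemma q_ge2: "q \<ge> 2"
proof -
  have "chp \<ge> 2" using chp_chk(1) prime_ge_2_nat by blast
  moreover have "chp ^ 1 \<le> chp ^ chk" using chp_chk(2) \<open>chp \<ge> 2\<close>
    by (intro power_increasing) auto
  ultimately show ?thesis using chp_chk(3) by simp
qed

lemma char_p: "of_nat chp = (0::'a)"
proof -
  have "of_nat (q ^ 3) = (0::'a)" using of_nat_card_zero[where 'a='a] cardF by simp
  moreover have "q ^ 3 = chp ^ (chk * 3)" using chp_chk(3) by (simp add: power_mult)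
  ultimately have "(of_nat chp :: 'a) ^ (chk * 3) = 0" by (metis of_nat_power)
  then show ?thesis using chp_chk(2) by (simp add: power_eq_0_iff)
qed

lemma frob_add: "(x + y :: 'a) ^ (chp ^ n) = x ^ (chp ^ n) + y ^ (chp ^ n)"
proof (induction n)
  case 0 then show ?case by simp
next
  case (Suc n)
  have "(x + y) ^ (chp ^ Suc n) = ((x + y) ^ (chp ^ n)) ^ chp" by (simp add: power_mult[symmetric] mult.commute)
  also have "\<dots> = (x ^ (chp ^ n)) ^ chp + (y ^ (chp ^ n)) ^ chp" using Suc frob_p[OF chp_chk(1) char_p] by simp
  also have "\<dots> = x ^ (chp ^ Suc n) + y ^ (chp ^ Suc n)" by (simp add: power_mult[symmetric] mult.commute)
  finally show ?case .
qed

definition s :: "'a \<Rightarrow> 'a" where "s x = x ^ q"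

lemma s_add: "s (x + y) = s x + s y" unfolding s_def using frob_add[of x y chk] chp_chk(3) by simp
lemma s_mult: "s (x * y) = s x * s y" unfolding s_def by (simp add: power_mult_distrib)
lemma s_0[simp]: "s 0 = 0" unfolding s_def using q_ge2 by simp
lemma s_1[simp]: "s 1 = 1" unfolding s_def by simp
lemma s_neg: "s (- x) = - s x" using s_add[of x "-x"] by (simp add: eq_neg_iff_add_eq_0 add.commute)
lemma s_diff: "s (x - y) = s x - s y" using s_add[of x "-y"] s_neg[of y] by simp
lemma s_sss[simp]: "s (s (s x)) = x"
proof -
  have "s (s (s x)) = x ^ (q ^ 3)" unfolding s_def by (simp add: power_mult[symmetric] power3_eq_cube mult.assoc)
  then show ?thesis using pow_card[of x] cardF by simp
qed
lemma s_inj: "s x = s y \<longleftrightarrow> x = y" by (metis s_sss)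
lemma s_eq0[simp]: "s x = 0 \<longleftrightarrow> x = 0" using s_inj[of x 0] by simp
lemma s_inverse: "s (inverse x) = inverse (s x)"
  by (cases "x = 0") (auto simp: s_mult[symmetric] intro: inverse_unique[symmetric])
lemma s_divide: "s (x / y) = s x / s y" by (simp add: divide_inverse s_mult s_inverse)
lemma s_pow: "s (x ^ n) = s x ^ n" by (induction n) (auto simp: s_mult)
lemma s_of_nat: "s (of_nat n) = of_nat n" by (induction n) (auto simp: s_add)
lemma s_m1[simp]: "s (-1) = -1" by (simp add: s_neg)

definition Nm :: "'a \<Rightarrow> 'a" where "Nm x = x * s x * s (s x)"

lemma normq_Nm: "normq q x = Nm x"
  unfolding normq_def Nm_def s_def by (simp add: power_add power2_eq_square power_mult mult.commute mult.left_commute)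
lemma Nm_mult: "Nm (x * y) = Nm x * Nm y" unfolding Nm_def by (simp add: s_mult)
lemma Nm_s[simp]: "s (Nm x) = Nm x" unfolding Nm_def by (simp add: s_mult)
lemma Nm_sx[simp]: "Nm (s x) = Nm x" unfolding Nm_def by simp
lemma Nm_eq0[simp]: "Nm x = 0 \<longleftrightarrow> x = 0" unfolding Nm_def by simp
lemma Nm_inverse: "Nm (inverse x) = inverse (Nm x)" unfolding Nm_def by (simp add: s_inverse)
lemma Nm_divide: "Nm (x / y) = Nm x / Nm y" unfolding Nm_def by (simp add: s_divide)
lemma Nm_1[simp]: "Nm 1 = 1" unfolding Nm_def by simp
lemma Nm_0[simp]: "Nm 0 = 0" unfolding Nm_def by simp
lemma Nm_m1[simp]: "Nm (-1) = -1" unfolding Nm_def by simp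
lemma Nm_neg: "Nm (- x) = - Nm x" using Nm_mult[of "-1" x] by simp

end



lemma card_fibers:
  assumes "finite A" "\<And>a. a \<in> A \<Longrightarrow> card {x\<in>A. f x = f a} = k"
  shows "card A = card (f ` A) * k"
proof -
  have A: "A = (\<Union>b\<in>f ` A. {x\<in>A. f x = b})" by auto
  have "card A = (\<Sum>b\<in>f ` A. card {x\<in>A. f x = b})"
    by (subst A, rule card_UN_disjoint) (use assms(1) in auto)
  also have "\<dots> = (\<Sum>b\<in>f ` A. k)" by (rule sum.cong) (auto simp: assms(2))
  finally show ?thesis by simp
qed

lemma roots_pow_bound:
  assumes "n > 0"
  shows "card {x::'a::field. x ^ n = c} \<le> n"
proof -
  let ?p = "monom (1::'a) n + [:-c:]"
  have deg: "degree ?p = n" using assms by (subst degree_add_eq_left) (auto simp: degree_monom_eq)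
  then have "?p \<noteq> 0" using assms by auto
  then have "card {x. poly ?p x = 0} \<le> degree ?p" by (rule card_poly_roots_bound)
  moreover have "{x. poly ?p x = 0} = {x. x ^ n = c}" by (auto simp: poly_monom)
  ultimately show ?thesis using deg by simp
qed

lemma nat_cube_fact: "(q::nat) \<ge> 1 \<Longrightarrow> (q^2 + q + 1) * (q - 1) = q^3 - 1"
proof -
  assume "q \<ge> 1" then obtain m where "q = Suc m" by (cases q) auto
  then show ?thesis by (simp add: algebra_simps power2_eq_square power3_eq_cube)
qed

context ff begin

definition K0 :: "'a set" where "K0 = {t. t \<noteq> 0 \<and> s t = t}"
definition KN :: "'a set" where "KN = {z. Nm z = 1}"
definition UU :: "'a set" where "UU = {x. x \<noteq> 0}"

lemma card_UU: "card UU = q^3 - 1"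
proof -
  have "UU = UNIV - {0}" unfolding UU_def by auto
  then have "card UU = card (UNIV - {0::'a})" by simp
  also have "\<dots> = card (UNIV::'a set) - 1" by (rule card_Diff_singleton) auto
  finally have "card UU = card (UNIV::'a set) - 1" .
  then show ?thesis using cardF by simp
qed

lemma card_K0_le: "card K0 \<le> q - 1"
proof -
  have "K0 \<subseteq> {t. t ^ (q - 1) = 1}"
  proof
    fix t assume "t \<in> K0"
    then have t: "t \<noteq> 0" "t ^ q = t" unfolding K0_def s_def by auto
    have "t ^ q = t * t ^ (q - 1)" using q_ge2 by (metis Suc_diff_1 less_le_trans pos2 power_Suc)
    then show "t \<in> {t. t ^ (q - 1) = 1}" using t by simp
  qed
  moreover have "card {t::'a. t ^ (q - 1) = 1} \<le> q - 1" using q_ge2 by (intro roots_pow_bound) auto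
  ultimately show ?thesis by (meson card_mono finite order.trans)
qed

lemma card_KN_le: "card KN \<le> q^2 + q + 1"
proof -
  have "KN = {z. z ^ (q^2 + q + 1) = 1}" unfolding KN_def using normq_Nm normq_def by metis
  then show ?thesis using roots_pow_bound[of "q^2+q+1" 1] by simp
qed

definition hh :: "'a \<Rightarrow> 'a" where "hh x = s x / x"

lemma fiber_mult:
  assumes "a \<noteq> 0" "\<And>x. x \<noteq> 0 \<Longrightarrow> g x = g a \<longleftrightarrow> x / a \<in> S" "0 \<notin> S"
  shows "card {x\<in>UU. g x = g a} = card S"
proof -
  have "{x\<in>UU. g x = g a} = (\<lambda>t. a * t) ` S"
  proof (rule set_eqI, rule iffI)
    fix x assume "x \<in> {x\<in>UU. g x = g a}"
    then have "x \<noteq> 0" "x / a \<in> S" using assms unfolding UU_def by auto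
    then show "x \<in> (\<lambda>t. a * t) ` S" using assms(1)
      by (auto simp: image_iff intro!: bexI[of _ "x / a"])
  next
    fix x assume "x \<in> (\<lambda>t. a * t) ` S"
    then obtain t where "t \<in> S" "x = a * t" by auto
    moreover then have "t \<noteq> 0" using assms(3) by auto
    ultimately show "x \<in> {x\<in>UU. g x = g a}" using assms unfolding UU_def by auto
  qed
  then show ?thesis using assms(1) by (simp add: card_image inj_on_def)
qed

lemma hh_fiber: "a \<in> UU \<Longrightarrow> card {x\<in>UU. hh x = hh a} = card K0"
proof (rule fiber_mult)
  fix x assume a: "a \<in> UU" and x: "x \<noteq> (0::'a)"
  have a0: "a \<noteq> 0" using a unfolding UU_def by auto
  show "hh x = hh a \<longleftrightarrow> x / a \<in> K0"
    unfolding hh_def K0_def using a0 x by (simp add: s_divide frac_eq_eq ac_simps)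
qed (auto simp: UU_def K0_def)

lemma Nm_fiber: "a \<in> UU \<Longrightarrow> card {x\<in>UU. Nm x = Nm a} = card KN"
proof (rule fiber_mult)
  fix x assume a: "a \<in> UU" and x: "x \<noteq> (0::'a)"
  have a0: "a \<noteq> 0" using a unfolding UU_def by auto
  show "Nm x = Nm a \<longleftrightarrow> x / a \<in> KN"
    unfolding KN_def using a0 x by (simp add: Nm_divide)
qed (auto simp: UU_def KN_def Nm_def)

lemma hh_KN: "x \<in> UU \<Longrightarrow> hh x \<in> KN"
  unfolding hh_def KN_def UU_def by (simp add: Nm_divide)

lemma counts: "card K0 = q - 1" "card KN = q^2 + q + 1" "hh ` UU = KN"
proof -
  have "card UU = card (hh ` UU) * card K0" by (rule card_fibers) (auto simp: hh_fiber)
  then have e: "q^3 - 1 = card (hh ` UU) * card K0" by (simp add: card_UU)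
  have "card (hh ` UU) \<le> card KN" using hh_KN by (intro card_mono) auto
  then have l1: "card (hh ` UU) \<le> q^2 + q + 1" using card_KN_le by linarith
  have l2: "card K0 \<le> q - 1" by (rule card_K0_le)
  have eq: "(q^2 + q + 1) * (q - 1) = q^3 - 1" using q_ge2 by (intro nat_cube_fact) auto
  have qpos: "q - 1 > 0" "q^2 + q + 1 > 0" using q_ge2 by auto
  have c1: "card (hh ` UU) = q^2 + q + 1"
  proof (rule ccontr)
    assume "card (hh ` UU) \<noteq> q^2 + q + 1"
    then have lt: "card (hh ` UU) < q^2 + q + 1" using l1 by simp
    have "card (hh ` UU) * card K0 \<le> card (hh ` UU) * (q - 1)" using l2 by (rule mult_le_mono2)
    also have "\<dots> < (q^2 + q + 1) * (q - 1)" using lt qpos(1) by (rule mult_less_mono1)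
    finally show False using e eq by simp
  qed
  then show "card K0 = q - 1" using e eq qpos by (metis mult_left_cancel less_not_refl)
  show "card KN = q^2 + q + 1" using c1 card_KN_le \<open>card (hh ` UU) \<le> card KN\<close> by linarith
  show "hh ` UU = KN"
    by (rule card_subset_eq) (use hh_KN c1 card_KN_le \<open>card (hh ` UU) \<le> card KN\<close> in auto)
qed

lemma Nm_K0: "x \<in> UU \<Longrightarrow> Nm x \<in> K0" unfolding K0_def UU_def by simp

lemma Nm_image: "Nm ` UU = K0"
proof -
  have "card UU = card (Nm ` UU) * card KN" by (rule card_fibers) (auto simp: Nm_fiber)
  then have e: "q^3 - 1 = card (Nm ` UU) * (q^2 + q + 1)" by (simp add: card_UU counts)
  have eq: "(q^2 + q + 1) * (q - 1) = q^3 - 1" using q_ge2 by (intro nat_cube_fact) auto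
  then have "card (Nm ` UU) * (q^2 + q + 1) = (q - 1) * (q^2 + q + 1)" using e by (simp add: mult.commute)
  then have "card (Nm ` UU) = q - 1" by (metis mult_right_cancel add_gr_0 less_numeral_extra(1) less_not_refl)
  then show ?thesis by (intro card_subset_eq) (auto simp: Nm_K0 counts)
qed

lemma hilbert90: "Nm z = 1 \<Longrightarrow> \<exists>y. y \<noteq> 0 \<and> z = s y / y"
  using counts(3) unfolding KN_def UU_def hh_def by (metis (mono_tags, lifting) image_iff mem_Collect_eq)

lemma Nm_surj: "c \<noteq> 0 \<Longrightarrow> s c = c \<Longrightarrow> \<exists>b. b \<noteq> 0 \<and> Nm b = c"
  using Nm_image unfolding K0_def UU_def by (metis (mono_tags, lifting) image_iff mem_Collect_eq)

lemma card_Nm_fiber: "c \<noteq> 0 \<Longrightarrow> s c = c \<Longrightarrow> card {b. Nm b = c} = q^2 + q + 1"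
proof -
  assume c: "c \<noteq> 0" "s c = c"
  then obtain b where b: "b \<noteq> 0" "Nm b = c" using Nm_surj by blast
  have "{b'. Nm b' = c} = {x\<in>UU. Nm x = Nm b}" using b c unfolding UU_def by auto
  then show ?thesis using Nm_fiber[of b] b by (simp add: UU_def counts)
qed

lemma card_nonnorm1: "card {b. b \<noteq> 0 \<and> Nm b \<noteq> 1} = q^3 - 1 - (q^2 + q + 1)"
proof -
  have "{b. b \<noteq> 0 \<and> Nm b \<noteq> 1} = UU - KN" unfolding UU_def KN_def by auto
  moreover have "KN \<subseteq> UU" unfolding UU_def KN_def by auto
  ultimately show ?thesis by (simp add: card_Diff_subset card_UU counts)
qed

end



lemma sc_simp[simp]: "sc k (x, y, z) = (k * x, k * y, k * z)" by (simp add: sc_def)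
lemma dot_simp[simp]: "dot (a, b, c) (x, y, z) = a * x + b * y + c * z" by (simp add: dot_def)
lemma det3_simp[simp]: "det3 (a, b, c) (d, e, f) (g, h, i) =
      a * (e * i - f * h) - b * (d * i - f * g) + c * (d * h - e * g)" by (simp add: det3_def)

lemma mem_pt: "w \<in> pt v \<longleftrightarrow> (\<exists>k. k \<noteq> 0 \<and> w = sc k v)" unfolding pt_def by auto

lemma self_pt: "v \<in> pt (v::'a::field trip)"
  unfolding mem_pt by (rule exI[of _ 1]) (cases v, auto)

lemma sc_sc: "sc k (sc l v) = sc (k * l) (v::'a::field trip)" by (cases v) (auto simp: mult.assoc)
lemma sc_1: "sc 1 v = (v::'a::field trip)" by (cases v) auto

lemma pt_eq_iff: "pt u = pt v \<longleftrightarrow> (\<exists>k. k \<noteq> 0 \<and> u = sc k (v::'a::field trip))"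
proof
  assume "pt u = pt v" then show "\<exists>k. k \<noteq> 0 \<and> u = sc k v" using self_pt[of u] mem_pt by blast
next
  assume "\<exists>k. k \<noteq> 0 \<and> u = sc k v"
  then obtain k where k: "k \<noteq> 0" "u = sc k v" by blast
  show "pt u = pt v"
  proof (rule set_eqI)
    fix w
    show "w \<in> pt u \<longleftrightarrow> w \<in> pt v"
    proof
      assume "w \<in> pt u" then obtain l where "l \<noteq> 0" "w = sc l u" using mem_pt by blast
      then show "w \<in> pt v" using k by (auto simp: mem_pt sc_sc intro!: exI[of _ "l * k"])
    next
      assume "w \<in> pt v" then obtain l where l: "l \<noteq> 0" "w = sc l v" using mem_pt by blast
      have "w = sc (l / k) u" using k l by (auto simp: sc_sc)
      then show "w \<in> pt u" using k l unfolding mem_pt by (intro exI[of _ "l / k"]) auto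
    qed
  qed
qed

lemma pt1_eq: "pt (a, b, 1) = pt (a', b', (1::'a::field)) \<longleftrightarrow> a = a' \<and> b = b'"
  by (auto simp: pt_eq_iff)

lemma inc_pt: "inc (pt p) (pt l) \<longleftrightarrow> dot l (p::'a::field trip) = 0"
proof
  have d: "dot (sc k l) (sc m p) = k * m * dot l p" for k m
    by (cases l, cases p) (simp add: algebra_simps)
  assume "inc (pt p) (pt l)"
  then obtain p' l' where "p' \<in> pt p" "l' \<in> pt l" "dot l' p' = 0" unfolding inc_def by blast
  then obtain k m where "k \<noteq> 0" "m \<noteq> 0" "dot (sc m l) (sc k p) = 0" unfolding mem_pt by blast
  then show "dot l p = 0" using d by simp
next
  assume "dot l p = 0"
  then show "inc (pt p) (pt l)" unfolding inc_def using self_pt by blast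
qed

lemma dep3_pt: "dep3 (pt u) (pt v) (pt w) \<longleftrightarrow> det3 u v (w::'a::field trip) = 0"
proof
  have d: "det3 (sc k u) (sc l v) (sc m w) = k * l * m * det3 u v w" for k l m
    by (cases u, cases v, cases w) (simp add: algebra_simps)
  assume "dep3 (pt u) (pt v) (pt w)"
  then obtain u' v' w' where "u' \<in> pt u" "v' \<in> pt v" "w' \<in> pt w" "det3 u' v' w' = 0" unfolding dep3_def by blast
  then obtain k l m where "k \<noteq> 0" "l \<noteq> 0" "m \<noteq> 0" "det3 (sc k u) (sc l v) (sc m w) = 0" unfolding mem_pt by blast
  then show "det3 u v w = 0" using d by simp
next
  assume "det3 u v w = 0"
  then show "dep3 (pt u) (pt v) (pt w)" unfolding dep3_def using self_pt by blast
qed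

lemma PG_iff: "P \<in> PG \<longleftrightarrow> (\<exists>v. v \<noteq> (0, 0, 0) \<and> P = pt v)" unfolding PG_def by auto

lemma inc_mT: "inc (pt (x, y, z)) mT \<longleftrightarrow> z = (0::'a::field)"
  unfolding mT_def inc_pt by simp

lemma notmT_iff:
  "(P \<in> PG \<and> \<not> inc P mT) \<longleftrightarrow> (\<exists>a b. P = pt (a, b, (1::'a::field)))"
proof
  assume A: "P \<in> PG \<and> \<not> inc P mT"
  then obtain x y z where P: "P = pt (x, y, z)" "(x, y, z) \<noteq> (0, 0, 0)" unfolding PG_iff by auto
  then have z: "z \<noteq> 0" using A inc_mT by blast
  have "pt (x, y, z) = pt (x / z, y / z, 1)" unfolding pt_eq_iff using z by (intro exI[of _ z]) auto
  then show "\<exists>a b. P = pt (a, b, 1)" using P by blast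
next
  assume "\<exists>a b. P = pt (a, b, (1::'a::field))"
  then obtain a b where P: "P = pt (a, b, 1)" by blast
  have "P \<in> PG" unfolding PG_iff using P by (intro exI[of _ "(a, b, 1)"]) auto
  then show "P \<in> PG \<and> \<not> inc P mT" using P by (auto simp: inc_mT)
qed

lemma PG_mT_iff:
  "(P \<in> PG \<and> inc P mT) \<longleftrightarrow> (\<exists>x y. (x, y) \<noteq> (0, 0) \<and> P = pt (x, y, (0::'a::field)))"
proof
  assume A: "P \<in> PG \<and> inc P mT"
  then obtain x y z where P: "P = pt (x, y, z)" "(x, y, z) \<noteq> (0, 0, 0)" unfolding PG_iff by auto
  then have z: "z = 0" using A inc_mT by blast
  then show "\<exists>x y. (x, y) \<noteq> (0, 0) \<and> P = pt (x, y, 0)" using P by auto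
next
  assume "\<exists>x y. (x, y) \<noteq> (0, 0) \<and> P = pt (x, y, (0::'a::field))"
  then obtain x y where P: "(x, y) \<noteq> (0, 0)" "P = pt (x, y, (0::'a::field))" by blast
  have "P \<in> PG" unfolding PG_iff using P by (intro exI[of _ "(x, y, 0)"]) auto
  then show "P \<in> PG \<and> inc P mT" using P by (auto simp: inc_mT)
qed

context ff begin

definition phv :: "'a trip \<Rightarrow> 'a trip" where "phv v = (case v of (x, y, z) \<Rightarrow> (s z, s x, s y))"

lemma phv_simp[simp]: "phv (x, y, z) = (s z, s x, s y)" by (simp add: phv_def)

lemma phi_pt: "phi q (pt v) = pt (phv v)"
proof -
  obtain x y z where v: "v = (x, y, z)" by (cases v)
  let ?f = "\<lambda>(x, y, z). (s z, s x, s y)"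
  have "phi q (pt v) = ?f ` pt v" unfolding phi_def s_def by simp
  also have "\<dots> = pt (phv v)"
  proof (rule set_eqI, rule iffI)
    fix w assume "w \<in> ?f ` pt v"
    then obtain v' where v': "v' \<in> pt v" "w = ?f v'" by (rule imageE)
    then obtain k where k: "k \<noteq> 0" "v' = sc k v" unfolding mem_pt by blast
    have "w = sc (s k) (phv v)" using v' k unfolding v by (simp add: s_mult)
    then show "w \<in> pt (phv v)" unfolding mem_pt using k by (intro exI[of _ "s k"]) auto
  next
    fix w assume "w \<in> pt (phv v)"
    then obtain k where k: "k \<noteq> 0" "w = sc k (phv v)" unfolding mem_pt by blast
    have "w = ?f (sc (s (s k)) v)" using k unfolding v by (simp add: s_mult)
    moreover have "sc (s (s k)) v \<in> pt v" using k unfolding mem_pt by (intro exI[of _ "s (s k)"]) auto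
    ultimately show "w \<in> ?f ` pt v" by (rule image_eqI)
  qed
  finally show ?thesis .
qed

definition pv :: "'a \<Rightarrow> 'a trip" where "pv x = (x, s x, s (s x))"

lemma pow_q2: "x ^ (q^2) = s (s x)" unfolding s_def by (simp add: power2_eq_square power_mult)

lemma subplane_eq: "subplane q = {pt (pv x) | x. x \<noteq> 0}"
  unfolding subplane_def pv_def using pow_q2 by (simp add: s_def)

lemma S_set_eq: "S_set q \<theta> = {pt (x * \<theta>, s x, 0) | x. x \<noteq> 0}"
  unfolding S_set_def s_def by simp

lemma in_subplane1: "pt (a, b, 1) \<in> subplane q \<longleftrightarrow> (\<exists>x. x \<noteq> 0 \<and> a = x / s (s x) \<and> b = s x / s (s x))"
proof
  assume "pt (a, b, 1) \<in> subplane q"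
  then obtain x where x: "x \<noteq> 0" "pt (a, b, 1) = pt (pv x)" unfolding subplane_eq by auto
  then obtain k where "k \<noteq> 0" "(a, b, 1) = sc k (pv x)" unfolding pt_eq_iff by blast
  then show "\<exists>x. x \<noteq> 0 \<and> a = x / s (s x) \<and> b = s x / s (s x)" using x unfolding pv_def
    by (auto simp: field_simps intro!: exI[of _ x])
next
  assume "\<exists>x. x \<noteq> 0 \<and> a = x / s (s x) \<and> b = s x / s (s x)"
  then obtain x where x: "x \<noteq> 0" "a = x / s (s x)" "b = s x / s (s x)" by blast
  have "pt (a, b, 1) = pt (pv x)" unfolding pt_eq_iff pv_def using x by (auto intro!: exI[of _ "1 / s (s x)"])
  then show "pt (a, b, 1) \<in> subplane q" unfolding subplane_eq using x by auto
qed

end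



lemma prop2:
  fixes r0 r1 u v :: "'a::field"
  assumes "(r0, r1) \<noteq> (0, 0)" "(u, v) \<noteq> (0, 0)" "r1 * u = r0 * v"
  shows "pt (r0, r1, 0) = pt (u, v, 0)"
proof (cases "u = 0")
  case True
  then have v: "v \<noteq> 0" using assms(2) by auto
  then have "r0 = 0" using assms(3) True by simp
  then have "r1 \<noteq> 0" using assms(1) by auto
  show ?thesis unfolding pt_eq_iff using v True \<open>r0 = 0\<close> \<open>r1 \<noteq> 0\<close>
    by (intro exI[of _ "r1 / v"]) auto
next
  case False
  have "r1 = r0 * v / u" using assms(3) False by (simp add: field_simps)
  moreover have "r0 \<noteq> 0" using assms(1) assms(3) False by auto
  ultimately show ?thesis unfolding pt_eq_iff using False
    by (intro exI[of _ "r0 / u"]) auto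
qed

context ff begin

definition uu :: "'a \<Rightarrow> 'a \<Rightarrow> 'a" where "uu a x = x - a * s (s x)"
definition vv :: "'a \<Rightarrow> 'a \<Rightarrow> 'a" where "vv b x = s x - b * s (s x)"

lemma uv_nz:
  assumes "pt (a, b, 1) \<notin> subplane q" "x \<noteq> 0"
  shows "(uu a x, vv b x) \<noteq> (0, 0)"
proof
  assume "(uu a x, vv b x) = (0, 0)"
  then have "a = x / s (s x)" "b = s x / s (s x)" using assms(2) unfolding uu_def vv_def
    by (auto simp: field_simps)
  then show False using assms in_subplane1 by blast
qed

lemma det_proj: "det3 (a, b, 1) (pv x) (r0, r1, 0) = r1 * uu a x - r0 * vv b x"
  unfolding pv_def uu_def vv_def by (simp add: algebra_simps)

lemma proj_eq:
  assumes "pt (a, b, 1) \<notin> subplane q"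
  shows "projection (subplane q) (pt (a, b, 1)) = {pt (uu a x, vv b x, 0) | x. x \<noteq> 0}"
proof (rule set_eqI, rule iffI)
  fix R assume "R \<in> projection (subplane q) (pt (a, b, 1))"
  then have R: "R \<in> PG" "inc R mT" and "\<exists>Q\<in>subplane q. dep3 (pt (a, b, 1)) Q R"
    unfolding projection_def by auto
  then obtain x where x: "x \<noteq> 0" "dep3 (pt (a, b, 1)) (pt (pv x)) R" unfolding subplane_eq by auto
  obtain r0 r1 where r: "(r0, r1) \<noteq> (0, 0)" "R = pt (r0, r1, 0)" using R PG_mT_iff by blast
  have "r1 * uu a x - r0 * vv b x = 0" using x(2) r(2) dep3_pt det_proj by metis
  then have "R = pt (uu a x, vv b x, 0)" using prop2[OF r(1) uv_nz[OF assms x(1)]] r(2)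
    by (simp add: mult.commute)
  then show "R \<in> {pt (uu a x, vv b x, 0) | x. x \<noteq> 0}" using x by auto
next
  fix R assume "R \<in> {pt (uu a x, vv b x, 0) | x. x \<noteq> 0}"
  then obtain x where x: "x \<noteq> 0" "R = pt (uu a x, vv b x, 0)" by auto
  have "R \<in> PG \<and> inc R mT" using PG_mT_iff uv_nz[OF assms x(1)] x(2) by blast
  moreover have "dep3 (pt (a, b, 1)) (pt (pv x)) R" unfolding x(2) dep3_pt det_proj by (simp add: mult.commute)
  moreover have "pt (pv x) \<in> subplane q" unfolding subplane_eq using x by auto
  ultimately show "R \<in> projection (subplane q) (pt (a, b, 1))" unfolding projection_def by auto
qed

end



lemma coeff_extract:
  fixes c :: "nat \<Rightarrow> 'a::{field,finite}" and d :: "nat \<Rightarrow> nat"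
  assumes H: "\<And>x::'a. (\<Sum>i<m. c i * x ^ d i) = 0"
    and inj: "inj_on d {..<m}" and lt: "\<And>i. i < m \<Longrightarrow> d i < card (UNIV::'a set)"
    and j: "j < m"
  shows "c j = 0"
proof -
  let ?p = "\<Sum>i<m. monom (c i) (d i)"
  have cf: "coeff ?p n = (\<Sum>i<m. if d i = n then c i else 0)" for n
    by (simp add: coeff_sum coeff_monom)
  have "?p = 0"
  proof (rule ccontr)
    assume nz: "?p \<noteq> 0"
    have "degree ?p \<le> card (UNIV::'a set) - 1"
    proof (rule degree_le, intro allI impI)
      fix n assume "card (UNIV::'a set) - 1 < n"
      then have "\<And>i. i < m \<Longrightarrow> d i \<noteq> n" using lt by fastforce
      then show "coeff ?p n = 0" unfolding cf by (intro sum.neutral) auto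
    qed
    moreover have "card {x. poly ?p x = 0} \<le> degree ?p" by (rule card_poly_roots_bound[OF nz])
    moreover have "{x. poly ?p x = 0} = UNIV" using H by (auto simp: poly_sum poly_monom)
    moreover have "card (UNIV::'a set) > 0" by (simp add: finite_UNIV_card_ge_0)
    ultimately show False by simp
  qed
  then have "0 = coeff ?p (d j)" by simp
  also have "\<dots> = (\<Sum>i<m. if i = j then c i else 0)"
    unfolding cf using inj j by (intro sum.cong) (auto dest: inj_onD)
  also have "\<dots> = c j" using j by simp
  finally show ?thesis by simp
qed

definition EE :: "nat \<Rightarrow> nat \<Rightarrow> nat \<Rightarrow> nat \<Rightarrow> nat" where "EE q i j k = i + q * (j + q * k)"

lemma EE_inj:
  assumes "i < q" "j < q" "i' < q" "j' < q"
  shows "EE q i j k = EE q i' j' k' \<longleftrightarrow> i = i' \<and> j = j' \<and> k = k'"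
proof
  assume e: "EE q i j k = EE q i' j' k'"
  have "EE q i j k mod q = i" "EE q i' j' k' mod q = i'" using assms unfolding EE_def by auto
  then have ii: "i = i'" using e by simp
  have "EE q i j k div q = j + q * k" "EE q i' j' k' div q = j' + q * k'" using assms unfolding EE_def by auto
  then have jk: "j + q * k = j' + q * k'" using e by simp
  then have "(j + q * k) mod q = (j' + q * k') mod q" by simp
  then have jj: "j = j'" using assms by simp
  then have "k = k'" using jk assms by simp
  then show "i = i' \<and> j = j' \<and> k = k'" using ii jj by simp
qed simp

lemma EE_lt:
  assumes "i < q" "j < q" "k < q"
  shows "EE q i j k < q ^ 3"
proof -
  have "j + q * k < q * (k + 1)" using assms by (simp add: algebra_simps)
  also have "\<dots> \<le> q * q" using assms by (intro mult_le_mono2) auto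
  finally have M: "j + q * k < q * q" .
  have "i + q * (j + q * k) < q * (j + q * k + 1)" using assms by (simp add: algebra_simps)
  also have "\<dots> \<le> q * (q * q)" using M by (intro mult_le_mono2) auto
  finally show ?thesis unfolding EE_def by (simp add: power3_eq_cube)
qed

context ff begin

lemma pow_EE: "x ^ EE q i j k = x ^ i * s x ^ j * s (s x) ^ k"
  unfolding EE_def s_def by (simp add: power_add power_mult power_mult_distrib mult.assoc)

lemma expand:
  "Nm (uu a x) - n * Nm (vv b x) =
     ((1 - Nm a) - n * (1 - Nm b)) * x ^ EE q 1 1 1
   + (- s (s a) - n * s b * s (s b)) * x ^ EE q 1 2 0
   + (- s a - n * b * s b) * x ^ EE q 2 0 1
   + (s a * s (s a) + n * s b) * x ^ EE q 2 1 0
   + (- a - n * b * s (s b)) * x ^ EE q 0 1 2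
   + (a * s (s a) + n * s (s b)) * x ^ EE q 0 2 1
   + (a * s a + n * b) * x ^ EE q 1 0 2"
  unfolding pow_EE Nm_def uu_def vv_def by (simp add: s_diff s_mult power2_eq_square algebra_simps)

end



context ff begin

lemma coeffs_zero:
  assumes H: "\<And>x. Nm (uu a x) = n * Nm (vv b x)"
  shows "(1 - Nm a) - n * (1 - Nm b) = 0" "- a - n * b * s (s b) = 0" "a * s a + n * b = 0"
proof -
  define cl where "cl = [(1 - Nm a) - n * (1 - Nm b), - s (s a) - n * s b * s (s b),
     - s a - n * b * s b, s a * s (s a) + n * s b, - a - n * b * s (s b),
     a * s (s a) + n * s (s b), a * s a + n * b]"
  have G: "\<And>x. (\<Sum>i<7. cl ! i * x ^ ([EE q 1 1 1, EE q 1 2 0, EE q 2 0 1, EE q 2 1 0, EE q 0 1 2, EE q 0 2 1, EE q 1 0 2] ! i)) = 0"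
  proof -
    fix x
    have "Nm (uu a x) - n * Nm (vv b x) = 0" using H by simp
    then show "(\<Sum>i<7. cl ! i * x ^ ([EE q 1 1 1, EE q 1 2 0, EE q 2 0 1, EE q 2 1 0, EE q 0 1 2, EE q 0 2 1, EE q 1 0 2] ! i)) = 0"
      unfolding expand cl_def by (simp add: eval_nat_numeral algebra_simps)
  qed
  have all: "cl ! i = 0" if i: "i < 7" for i
  proof (cases "q = 2")
    case False
    then have q3: "q \<ge> 3" using q_ge2 by simp
    let ?d = "\<lambda>i. [EE q 1 1 1, EE q 1 2 0, EE q 2 0 1, EE q 2 1 0, EE q 0 1 2, EE q 0 2 1, EE q 1 0 2] ! i"
    have dist: "distinct [EE q 1 1 1, EE q 1 2 0, EE q 2 0 1, EE q 2 1 0, EE q 0 1 2, EE q 0 2 1, EE q 1 0 2]"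
      using q3 by (simp add: EE_inj)
    have inj: "inj_on ?d {..<7}" using inj_on_nth[OF dist] by simp
    have lt: "?d i < card (UNIV::'a set)" if "i < 7" for i
    proof -
      have "\<forall>e\<in>set [EE q 1 1 1, EE q 1 2 0, EE q 2 0 1, EE q 2 1 0, EE q 0 1 2, EE q 0 2 1, EE q 1 0 2]. e < q ^ 3"
        using q3 by (auto intro!: EE_lt)
      then show ?thesis using that cardF by (auto simp: eval_nat_numeral less_Suc_eq)
    qed
    show ?thesis by (rule coeff_extract[where d = ?d, OF G inj lt i])
  next
    case True
    have p8: "x ^ 8 = x" for x :: 'a using pow_card[of x] cardF True by simp
    have L: "[EE q 1 1 1, EE q 1 2 0, EE q 2 0 1, EE q 2 1 0, EE q 0 1 2, EE q 0 2 1, EE q 1 0 2] = [7, 5, 6, 4, 10, 8, 9]"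
      using True by (simp add: EE_def)
    have S7: "{..<7::nat} = {0, 1, 2, 3, 4, 5, 6}" by auto
    have G2: "(\<Sum>i<7. cl ! i * x ^ ([7, 5, 6, 4, 3, 1, 2] ! i)) = 0" for x :: 'a
    proof -
      have "x ^ 10 = x ^ 8 * x ^ 2" "x ^ 9 = x ^ 8 * x ^ 1" by (simp_all only: power_add[symmetric] numeral_plus_numeral) simp_all
      then have e: "x ^ 10 = x ^ 3" "x ^ 9 = x ^ 2" "x ^ 8 = x" using p8[of x] by (simp_all add: power2_eq_square power3_eq_cube)
      have "(\<Sum>i<7. cl ! i * x ^ ([7, 5, 6, 4, 10, 8, 9] ! i)) = 0" using G[of x] unfolding L .
      then show ?thesis unfolding S7 by (simp add: e)
    qed
    have inj: "inj_on (\<lambda>i. [7, 5, 6, 4, 3, 1, 2::nat] ! i) {..<7}"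
      unfolding inj_on_def by (auto simp: less_Suc_eq eval_nat_numeral)
    have lt: "[7, 5, 6, 4, 3, 1, 2::nat] ! i < card (UNIV::'a set)" if "i < 7" for i
      using that cardF True by (auto simp: eval_nat_numeral less_Suc_eq)
    show ?thesis by (rule coeff_extract[OF G2 inj lt i])
  qed
  show "(1 - Nm a) - n * (1 - Nm b) = 0" using all[of 0] unfolding cl_def by simp
  show "- a - n * b * s (s b) = 0" using all[of 4] unfolding cl_def by simp
  show "a * s a + n * b = 0" using all[of 6] unfolding cl_def by simp
qed

end



context ff begin

lemma necessity:
  assumes th: "\<theta> \<noteq> 0" and nsub: "pt (a, b, 1) \<notin> subplane q"
    and eq: "projection (subplane q) (pt (a, b, 1)) = S_set q \<theta>"
  shows "(a = 0 \<and> b = 0 \<and> Nm \<theta> = 1) \<or> (b \<noteq> 0 \<and> a = 1 / s b \<and> Nm b = -1 / Nm \<theta>)"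
proof -
  let ?n = "Nm \<theta>"
  have H: "Nm (uu a x) = ?n * Nm (vv b x)" for x
  proof (cases "x = 0")
    case True then show ?thesis by (simp add: uu_def vv_def)
  next
    case False
    have "pt (uu a x, vv b x, 0) \<in> S_set q \<theta>" using eq proj_eq[OF nsub] False by auto
    then obtain y where y: "y \<noteq> 0" "pt (uu a x, vv b x, 0) = pt (y * \<theta>, s y, 0)" unfolding S_set_eq by auto
    then obtain k where k: "k \<noteq> 0" "uu a x = k * (y * \<theta>)" "vv b x = k * s y" unfolding pt_eq_iff by auto
    show ?thesis using k by (simp add: Nm_mult)
  qed
  have n0: "?n \<noteq> 0" using th by simp
  have sn: "s ?n = ?n" by simp
  note C = coeffs_zero[OF H]
  show ?thesis
  proof (cases "b = 0")
    case True
    then have "a = 0" using C(2) by simp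
    then have "?n = 1" using C(1) True by (simp add: Nm_def)
    then show ?thesis using True \<open>a = 0\<close> by simp
  next
    case False
    have "a = (- a - ?n * b * s (s b)) * (-1) - ?n * b * s (s b)" by (simp add: algebra_simps)
    also have "\<dots> = - ?n * b * s (s b)" using C(2) by simp
    finally have a: "a = - ?n * b * s (s b)" .
    have sa: "s a = - ?n * s b * b" unfolding a by (simp add: s_mult s_neg)
    have "a * s a = (- ?n * b * s (s b)) * (- ?n * s b * b)" by (subst sa, subst a, rule refl)
    also have "\<dots> = ?n * ?n * b * Nm b" by (simp add: Nm_def[of b] algebra_simps)
    finally have "a * s a = ?n * ?n * b * Nm b" .
    then have E: "?n * b * (?n * Nm b + 1) = 0" using C(3) by (simp add: algebra_simps)
    then have "?n * Nm b + 1 = 0" using n0 False by simp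
    then have "?n * Nm b = -1" by (simp add: eq_neg_iff_add_eq_0)
    then have nb: "Nm b = -1 / ?n" using n0 by (simp add: field_simps)
    have "a = 1 / s b"
    proof -
      have "a * s b = (- ?n * b * s (s b)) * s b" by (subst a, rule refl)
      also have "\<dots> = - ?n * Nm b" by (simp add: Nm_def[of b] algebra_simps)
      finally have "a * s b = - ?n * Nm b" .
      also have "\<dots> = 1" using \<open>?n * Nm b = -1\<close> by simp
      finally show ?thesis using False by (simp add: field_simps)
    qed
    then show ?thesis using False nb by simp
  qed
qed

lemma suff_T:
  assumes th: "\<theta> \<noteq> 0" "Nm \<theta> = 1"
  shows "projection (subplane q) (pt (0, 0, 1)) = S_set q \<theta>"
proof -
  have nsub: "pt (0, 0, 1::'a) \<notin> subplane q" unfolding in_subplane1 by auto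
  obtain m where m: "m \<noteq> 0" "\<theta> = s m / m" using hilbert90[OF th(2)] by blast
  have key: "pt (x, s x, 0) = pt ((x * m) * \<theta>, s (x * m), 0)" if "x \<noteq> 0" for x
    unfolding pt_eq_iff using m that by (intro exI[of _ "1 / s m"]) (auto simp: s_mult)
  have "{pt (uu 0 x, vv 0 x, 0) | x. x \<noteq> 0} = {pt (y * \<theta>, s y, 0) | y. y \<noteq> 0}"
  proof (rule set_eqI, rule iffI)
    fix R assume "R \<in> {pt (uu 0 x, vv 0 x, 0) | x. x \<noteq> 0}"
    then obtain x where x: "x \<noteq> 0" "R = pt (x, s x, 0)" unfolding uu_def vv_def by auto
    then have "R = pt ((x * m) * \<theta>, s (x * m), 0)" using key[OF x(1)] by simp
    then show "R \<in> {pt (y * \<theta>, s y, 0) | y. y \<noteq> 0}" using x(1) m(1)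
      by (intro CollectI exI[of _ "x * m"]) auto
  next
    fix R assume "R \<in> {pt (y * \<theta>, s y, 0) | y. y \<noteq> 0}"
    then obtain y where y: "y \<noteq> 0" "R = pt (y * \<theta>, s y, 0)" by auto
    then have "R = pt (y / m, s (y / m), 0)" using key[of "y / m"] m by simp
    then show "R \<in> {pt (uu 0 x, vv 0 x, 0) | x. x \<noteq> 0}" unfolding uu_def vv_def using y m
      by (intro CollectI exI[of _ "y / m"]) auto
  qed
  then show ?thesis unfolding proj_eq[OF nsub] S_set_eq .
qed

lemma suff_b:
  assumes th: "\<theta> \<noteq> 0" and b: "b \<noteq> 0" and nb: "Nm b = -1 / Nm \<theta>"
    and nsub: "pt (1 / s b, b, 1) \<notin> subplane q"
  shows "projection (subplane q) (pt (1 / s b, b, 1)) = S_set q \<theta>"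
proof -
  let ?a = "1 / s b"
  let ?z = "-1 / (\<theta> * s b)"
  have "Nm ?z = 1" using th b nb by (simp add: Nm_divide Nm_mult Nm_neg field_simps)
  then obtain m where m: "m \<noteq> 0" "?z = s m / m" using hilbert90 by blast
  have sv: "s (vv b x) = - s b * uu ?a x" for x
    unfolding uu_def vv_def using b by (simp add: s_diff s_mult field_simps)
  have v0: "vv b x \<noteq> 0" if "x \<noteq> 0" for x
  proof
    assume "vv b x = 0"
    then have "uu ?a x = 0" using sv[of x] b by simp
    then show False using uv_nz[OF nsub that] \<open>vv b x = 0\<close> by simp
  qed
  have key: "pt (uu ?a x, vv b x, 0) = pt ((1 / (m * vv b x)) * \<theta>, s (1 / (m * vv b x)), 0)"
    if x: "x \<noteq> 0" for x
  proof -
    let ?v = "vv b x"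
    have "uu ?a x = - s ?v / s b" using sv[of x] b by (simp add: field_simps)
    also have "\<dots> = (?v * s m * s ?v) * ((1 / (m * ?v)) * \<theta>)"
    proof -
      have "s m / m = -1 / (\<theta> * s b)" using m by simp
      then have h: "\<theta> * s b * s m = - m" using m(1) th b by (simp add: field_simps)
      have "(?v * s m * s ?v) * ((1 / (m * ?v)) * \<theta>) = (\<theta> * s b * s m) * s ?v / (m * s b)"
        using v0[OF x] m(1) b by (simp add: field_simps)
      also have "\<dots> = - s ?v / s b" unfolding h using m(1) b by (simp add: field_simps)
      finally show ?thesis by simp
    qed
    finally have e1: "uu ?a x = (?v * s m * s ?v) * ((1 / (m * ?v)) * \<theta>)" .
    have e2: "?v = (?v * s m * s ?v) * s (1 / (m * ?v))"
      using v0[OF x] m(1) by (simp add: s_divide s_mult field_simps)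
    show ?thesis unfolding pt_eq_iff using e1 e2 v0[OF x] m(1)
      by (intro exI[of _ "?v * s m * s ?v"]) auto
  qed
  have inj: "inj (vv b)"
  proof (rule injI)
    fix x y assume e: "vv b x = vv b y"
    have "vv b (x - y) = 0" using e unfolding vv_def by (simp add: s_diff algebra_simps)
    then show "x = y" using v0[of "x - y"] by auto
  qed
  have surj: "surj (vv b)" by (rule finite_UNIV_inj_surj[OF _ inj]) simp
  have "{pt (uu ?a x, vv b x, 0) | x. x \<noteq> 0} = {pt (y * \<theta>, s y, 0) | y. y \<noteq> 0}"
  proof (rule set_eqI, rule iffI)
    fix R assume "R \<in> {pt (uu ?a x, vv b x, 0) | x. x \<noteq> 0}"
    then obtain x where x: "x \<noteq> 0" "R = pt (uu ?a x, vv b x, 0)" by auto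
    then show "R \<in> {pt (y * \<theta>, s y, 0) | y. y \<noteq> 0}" using key[OF x(1)] v0[OF x(1)] m(1)
      by (intro CollectI exI[of _ "1 / (m * vv b x)"]) auto
  next
    fix R assume "R \<in> {pt (y * \<theta>, s y, 0) | y. y \<noteq> 0}"
    then obtain y where y: "y \<noteq> 0" "R = pt (y * \<theta>, s y, 0)" by auto
    obtain x where x: "vv b x = 1 / (m * y)" using surj by (metis surjD)
    have x0: "x \<noteq> 0" using x y m(1) unfolding vv_def by auto
    have "1 / (m * vv b x) = y" using x m(1) y(1) by simp
    then have "R = pt (uu ?a x, vv b x, 0)" using key[OF x0] y by simp
    then show "R \<in> {pt (uu ?a x, vv b x, 0) | x. x \<noteq> 0}" using x0 by auto
  qed
  then show ?thesis unfolding proj_eq[OF nsub] S_set_eq .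
qed

end



context ff begin

definition Pb :: "'a \<Rightarrow> 'a trip set" where "Pb b = pt (1 / s b, b, 1)"

lemma hilbert90': "Nm z = 1 \<Longrightarrow> \<exists>x. x \<noteq> 0 \<and> z = s x / s (s x)"
proof -
  assume "Nm z = 1"
  then have "Nm (s (s z)) = 1" by simp
  then obtain y where y: "y \<noteq> 0" "s (s z) = s y / y" using hilbert90 by blast
  then have "z = s (s y) / s y" using s_sss[of z] by (metis s_divide)
  then show ?thesis using y(1) by (intro exI[of _ "1 / y"]) (simp add: s_divide)
qed

lemma sub_b: "b \<noteq> 0 \<Longrightarrow> Pb b \<in> subplane q \<longleftrightarrow> Nm b = 1"
proof
  assume "Pb b \<in> subplane q"
  then obtain x where x: "x \<noteq> 0" "b = s x / s (s x)" unfolding Pb_def in_subplane1 by blast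
  then show "Nm b = 1" by (simp add: Nm_divide)
next
  assume b: "b \<noteq> 0" and "Nm b = 1"
  then obtain x where x: "x \<noteq> 0" "b = s x / s (s x)" using hilbert90' by blast
  then have "1 / s b = x / s (s x)" by (simp add: s_divide)
  then show "Pb b \<in> subplane q" unfolding Pb_def in_subplane1 using x by blast
qed

lemma Tpt_eq: "(Tpt::'a trip set) = pt (0, 0, 1)" unfolding Tpt_def ..

lemma T_good: "(Tpt::'a trip set) \<in> PG \<and> \<not> inc (Tpt::'a trip set) mT \<and> (Tpt::'a trip set) \<notin> subplane q"
  unfolding Tpt_eq using notmT_iff[of "pt (0, 0, 1::'a)"] in_subplane1[of 0 0] by auto

lemma Pb_good: "Pb b \<in> PG \<and> \<not> inc (Pb b) mT"
  unfolding Pb_def using notmT_iff by blast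

lemma Pb_inj: "Pb b = Pb b' \<longleftrightarrow> b = b'" unfolding Pb_def pt1_eq by auto

lemma Pb_ne_T: "b \<noteq> 0 \<Longrightarrow> Pb b \<noteq> Tpt" unfolding Pb_def Tpt_eq pt1_eq by auto

lemma vertex_char:
  assumes th: "\<theta> \<noteq> 0"
  shows "vertices q \<theta> = (if Nm \<theta> = 1 then {Tpt} else {}) \<union> {Pb b | b. b \<noteq> 0 \<and> Nm b = -1 / Nm \<theta> \<and> Nm b \<noteq> 1}"
proof (rule set_eqI, rule iffI)
  fix P assume "P \<in> vertices q \<theta>"
  then have P: "P \<in> PG" "\<not> inc P mT" "P \<notin> subplane q" "projection (subplane q) P = S_set q \<theta>"
    unfolding vertices_def by auto
  then obtain a b where ab: "P = pt (a, b, 1)" using notmT_iff by blast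
  have "(a = 0 \<and> b = 0 \<and> Nm \<theta> = 1) \<or> (b \<noteq> 0 \<and> a = 1 / s b \<and> Nm b = -1 / Nm \<theta>)"
    using necessity[OF th] P ab by blast
  then show "P \<in> (if Nm \<theta> = 1 then {Tpt} else {}) \<union> {Pb b | b. b \<noteq> 0 \<and> Nm b = -1 / Nm \<theta> \<and> Nm b \<noteq> 1}"
  proof
    assume "a = 0 \<and> b = 0 \<and> Nm \<theta> = 1"
    then show ?thesis using ab Tpt_eq by auto
  next
    assume h: "b \<noteq> 0 \<and> a = 1 / s b \<and> Nm b = -1 / Nm \<theta>"
    then have "P = Pb b" using ab Pb_def by simp
    then have "Nm b \<noteq> 1" using sub_b h P(3) by blast
    then show ?thesis using h \<open>P = Pb b\<close> by auto
  qed
next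
  fix P assume "P \<in> (if Nm \<theta> = 1 then {Tpt} else {}) \<union> {Pb b | b. b \<noteq> 0 \<and> Nm b = -1 / Nm \<theta> \<and> Nm b \<noteq> 1}"
  then consider "Nm \<theta> = 1" "P = Tpt" | b where "b \<noteq> 0" "Nm b = -1 / Nm \<theta>" "Nm b \<noteq> 1" "P = Pb b"
    by (auto split: if_splits)
  then show "P \<in> vertices q \<theta>"
  proof cases
    case 1
    then show ?thesis unfolding vertices_def using T_good suff_T[OF th] Tpt_eq by auto
  next
    case (2 b)
    have ns: "Pb b \<notin> subplane q" using sub_b 2 by blast
    then have "projection (subplane q) (Pb b) = S_set q \<theta>" unfolding Pb_def using suff_b[OF th 2(1) 2(2)] by blast
    then show ?thesis unfolding vertices_def using Pb_good ns 2 by auto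
  qed
qed

lemma Pi_char: "\<eta> \<noteq> 0 \<Longrightarrow> Pi_set q \<eta> = {Pb b | b. b \<noteq> 0 \<and> Nm b = 1 / Nm \<eta>}"
proof (rule set_eqI, rule iffI)
  fix P assume eta: "\<eta> \<noteq> 0" and "P \<in> Pi_set q \<eta>"
  then obtain r where r: "r \<noteq> 0" "P = pt (r * \<eta> ^ (q + 1), r ^ q, r ^ (q^2) * \<eta>)" unfolding Pi_set_def by auto
  have e: "\<eta> ^ (q + 1) = s \<eta> * \<eta>" "r ^ q = s r" "r ^ (q^2) = s (s r)" unfolding s_def using pow_q2[of r]
    by (auto simp: s_def)
  let ?b = "s r / (s (s r) * \<eta>)"
  have sb: "s ?b = s (s r) / (r * s \<eta>)" by (simp add: s_divide s_mult)
  have "P = Pb ?b" unfolding r(2) e Pb_def pt_eq_iff using r(1) eta sb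
    by (intro exI[of _ "s (s r) * \<eta>"]) (auto simp: field_simps)
  moreover have "Nm ?b = 1 / Nm \<eta>" using r(1) eta by (simp add: Nm_divide Nm_mult)
  moreover have "?b \<noteq> 0" using r(1) eta by simp
  ultimately show "P \<in> {Pb b | b. b \<noteq> 0 \<and> Nm b = 1 / Nm \<eta>}" by blast
next
  fix P assume eta: "\<eta> \<noteq> 0" and "P \<in> {Pb b | b. b \<noteq> 0 \<and> Nm b = 1 / Nm \<eta>}"
  then obtain b where b: "b \<noteq> 0" "Nm b = 1 / Nm \<eta>" "P = Pb b" by auto
  have "Nm (b * \<eta>) = 1" using b eta by (simp add: Nm_mult)
  then obtain r where r: "r \<noteq> 0" "b * \<eta> = s r / s (s r)" using hilbert90' by blast
  have bb: "b = s r / (s (s r) * \<eta>)" using r eta by (simp add: field_simps)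
  have e: "\<eta> ^ (q + 1) = s \<eta> * \<eta>" "r ^ q = s r" "r ^ (q^2) = s (s r)" unfolding s_def using pow_q2[of r]
    by (auto simp: s_def)
  have sb: "s b = s (s r) / (r * s \<eta>)" unfolding bb by (simp add: s_divide s_mult)
  have isb: "1 / s b = r * s \<eta> / s (s r)" using sb r(1) eta b(1) by (simp add: field_simps)
  have "P = pt (r * \<eta> ^ (q + 1), r ^ q, r ^ (q^2) * \<eta>)" unfolding b(3) e Pb_def isb pt_eq_iff using r(1) eta bb
    by (intro exI[of _ "1 / (s (s r) * \<eta>)"]) (auto simp: field_simps)
  then show "P \<in> Pi_set q \<eta>" unfolding Pi_set_def using r(1) by auto
qed

end



context ff begin

lemma phi_T: "phi q (Tpt::'a trip set) = pt (1, 0, 0)" "phi q (phi q (Tpt::'a trip set)) = pt (0, 1, 0)"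
  unfolding Tpt_eq phi_pt by simp_all

lemma Fig_char: "{P \<in> Fig q (Tpt::'a trip set). \<not> inc P mT} = {Pb b | b. b \<noteq> 0 \<and> Nm b \<noteq> 1}"
proof (rule set_eqI, rule iffI)
  fix P assume "P \<in> {P \<in> Fig q (Tpt::'a trip set). \<not> inc P mT}"
  then have PF: "P \<in> E_set q Tpt \<or> P \<in> F_set q Tpt" and nP: "\<not> inc P mT" unfolding Fig_def by auto
  have "P \<notin> E_set q Tpt"
  proof
    assume "P \<in> E_set q Tpt"
    then have h: "typeII_pt q P" "dep3 (phi q Tpt) (phi q (phi q Tpt)) P" unfolding E_set_def by auto
    then have "P \<in> PG" unfolding typeII_pt_def by blast
    moreover have "dep3 (pt (1, 0, 0)) (pt (0, 1, 0)) P" using h(2) by (simp add: phi_T phi_pt)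
    ultimately have "P \<in> PG" "dep3 (pt (1, 0, 0)) (pt (0, 1, 0)) P" by auto
    then obtain v where "v \<noteq> (0, 0, 0)" "P = pt v" "dep3 (pt (1, 0, 0)) (pt (0, 1, 0)) (pt v)" unfolding PG_iff by auto
    moreover obtain y0 y1 y2 where "v = (y0, y1, y2)" by (cases v)
    ultimately show False using nP by (simp add: dep3_pt inc_mT)
  qed
  then have "P \<in> F_set q Tpt" using PF by blast
  then obtain l where P: "P \<in> PG" and l: "typeIII q l" "inc Tpt l" "inc P (phi q l)" "inc P (phi q (phi q l))"
    unfolding F_set_def by blast
  obtain y0 y1 where Py: "P = pt (y0, y1, 1)" using P nP notmT_iff by blast
  obtain lv where lv: "lv \<noteq> (0, 0, 0)" "l = pt lv" using l(1) unfolding typeIII_def PG_iff by auto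
  obtain l0 l1 l2 where lv3: "lv = (l0, l1, l2)" by (cases lv)
  have l2: "l2 = 0" using l(2) unfolding lv(2) lv3 Tpt_eq inc_pt by simp
  have e1: "s l0 * y1 + s l1 = 0" using l(3) unfolding lv(2) lv3 Py phi_pt inc_pt l2 by (simp add: mult.commute)
  have e2: "s (s l1) * y0 + s (s l0) = 0" using l(4) unfolding lv(2) lv3 Py phi_pt inc_pt l2 by (simp add: mult.commute)
  have det: "Nm l0 + Nm l1 \<noteq> 0" using l(1) unfolding typeIII_def lv(2) lv3 phi_pt dep3_pt l2
    by (simp add: Nm_def algebra_simps)
  have l0: "l0 \<noteq> 0"
  proof
    assume "l0 = 0" then have "l1 = 0" using e1 by simp
    then show False using lv \<open>l0 = 0\<close> lv3 l2 by simp
  qed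
  have l1: "l1 \<noteq> 0"
  proof
    assume "l1 = 0" then show False using e2 l0 by simp
  qed
  have y1: "y1 = - s l1 / s l0" using e1 l0 by (simp add: field_simps eq_neg_iff_add_eq_0)
  have y0: "y0 = - s (s l0) / s (s l1)" using e2 l1 by (simp add: field_simps eq_neg_iff_add_eq_0)
  have b0: "y1 \<noteq> 0" using y1 l0 l1 by simp
  have "1 / s y1 = y0" unfolding y1 y0 using l0 l1 by (simp add: s_divide s_neg)
  then have "P = Pb y1" unfolding Py Pb_def by simp
  moreover have "Nm y1 \<noteq> 1"
  proof
    assume "Nm y1 = 1"
    then have "- Nm l1 / Nm l0 = 1" unfolding y1 by (simp add: Nm_divide Nm_neg)
    then have "- Nm l1 = Nm l0" using l0 by (simp add: field_simps)
    then have "Nm l0 + Nm l1 = 0" by (metis add.commute add.right_inverse)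
    then show False using det by simp
  qed
  ultimately show "P \<in> {Pb b | b. b \<noteq> 0 \<and> Nm b \<noteq> 1}" using b0 by blast
next
  fix P assume "P \<in> {Pb b | b. b \<noteq> 0 \<and> Nm b \<noteq> 1}"
  then obtain b where b: "b \<noteq> 0" "Nm b \<noteq> 1" "P = Pb b" by blast
  let ?l = "pt (1, - s (s b), 0::'a)"
  have "?l \<in> PG" unfolding PG_iff by (intro exI[of _ "(1, - s (s b), 0)"]) auto
  moreover have "\<not> dep3 ?l (phi q ?l) (phi q (phi q ?l))"
  proof -
    have "det3 (1, - s (s b), 0) (phv (1, - s (s b), 0)) (phv (phv (1, - s (s b), 0))) = 1 - Nm b"
      by (simp add: s_neg Nm_def algebra_simps)
    then show ?thesis unfolding phi_pt dep3_pt using b(2) by simp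
  qed
  ultimately have t3: "typeIII q ?l" unfolding typeIII_def by blast
  have i1: "inc Tpt ?l" unfolding Tpt_eq inc_pt by simp
  have i2: "inc P (phi q ?l)" unfolding b(3) Pb_def phi_pt inc_pt by (simp add: s_neg)
  have i3: "inc P (phi q (phi q ?l))" unfolding b(3) Pb_def phi_pt inc_pt using b(1) by (simp add: s_neg)
  have "P \<in> PG" using Pb_good b(3) by simp
  then have "P \<in> F_set q Tpt" unfolding F_set_def using t3 i1 i2 i3 by blast
  moreover have "\<not> inc P mT" using Pb_good b(3) by simp
  ultimately show "P \<in> {P \<in> Fig q (Tpt::'a trip set). \<not> inc P mT}" unfolding Fig_def by blast
qed

lemma even_char: "even q \<Longrightarrow> (2::'a) = 0"
proof -
  assume "even q"
  then have "even chp" using chp_chk(2,3) by (metis even_power)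
  then have "chp = 2" using chp_chk(1) unfolding prime_nat_iff by auto
  then show ?thesis using char_p by simp
qed

lemma odd_char: "odd q \<Longrightarrow> (2::'a) \<noteq> 0"
proof
  assume "odd q" "(2::'a) = 0"
  then have "odd chp" using chp_chk(2,3) by (metis even_power)
  then obtain j where "chp = 2 * j + 1" by (metis oddE)
  then have "(of_nat chp::'a) = 2 * of_nat j + 1" by simp
  then have "(of_nat chp::'a) = 1" using \<open>(2::'a) = 0\<close> by simp
  then show False using char_p by simp
qed

end



context ff begin

lemma c_ok: "\<theta> \<noteq> 0 \<Longrightarrow> -1 / Nm \<theta> \<noteq> 0 \<and> s (-1 / Nm \<theta>) = -1 / Nm \<theta>"
  by (simp add: s_divide s_neg)

lemma T_ne_Pb: "b \<noteq> 0 \<Longrightarrow> Tpt \<noteq> Pb b" using Pb_ne_T by metis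

lemma Pb_set_finite: "finite (A :: 'a trip set set)" by (rule finite_subset[of _ UNIV]) auto

lemma card_Pb_fiber:
  assumes "c \<noteq> 0" "s c = c"
  shows "card {Pb b | b. b \<noteq> 0 \<and> Nm b = c} = q^2 + q + 1"
proof -
  have "{Pb b | b. b \<noteq> 0 \<and> Nm b = c} = Pb ` {b. Nm b = c}" using assms(1) Nm_0 by blast
  moreover have "inj_on Pb {b. Nm b = c}" using Pb_inj unfolding inj_on_def by blast
  ultimately show ?thesis using card_Nm_fiber[OF assms] by (simp add: card_image)
qed

lemma drop_ne1: "c \<noteq> 1 \<Longrightarrow> {Pb b | b. b \<noteq> 0 \<and> Nm b = c \<and> Nm b \<noteq> 1} = {Pb b | b. b \<noteq> 0 \<and> Nm b = c}"
  by blast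

lemma empty_eq1: "{Pb b | b. b \<noteq> 0 \<and> Nm b = 1 \<and> Nm b \<noteq> 1} = {}" by blast

lemma Pi_neg: "\<theta> \<noteq> 0 \<Longrightarrow> Pi_set q (-\<theta>) = {Pb b | b. b \<noteq> 0 \<and> Nm b = -1 / Nm \<theta>}"
  using Pi_char[of "-\<theta>"] by (simp add: Nm_neg)

lemma LHS_eq:
  "{P \<in> PG. P \<notin> subplane q \<and> \<not> inc P mT \<and>
     (\<exists>\<theta>::'a. \<theta> \<noteq> 0 \<and> projection (subplane q) P = S_set q \<theta>)} = insert Tpt {Pb b | b. b \<noteq> 0 \<and> Nm b \<noteq> 1}"
proof -
  have "{P \<in> PG. P \<notin> subplane q \<and> \<not> inc P mT \<and>
     (\<exists>\<theta>::'a. \<theta> \<noteq> 0 \<and> projection (subplane q) P = S_set q \<theta>)} = (\<Union>\<theta>\<in>{\<theta>::'a. \<theta> \<noteq> 0}. vertices q \<theta>)"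
    unfolding vertices_def by auto
  also have "\<dots> = insert Tpt {Pb b | b. b \<noteq> 0 \<and> Nm b \<noteq> 1}"
  proof (rule set_eqI, rule iffI)
    fix P assume "P \<in> (\<Union>\<theta>\<in>{\<theta>::'a. \<theta> \<noteq> 0}. vertices q \<theta>)"
    then obtain \<theta> where "\<theta> \<noteq> 0" "P \<in> vertices q \<theta>" by auto
    then show "P \<in> insert Tpt {Pb b | b. b \<noteq> 0 \<and> Nm b \<noteq> 1}" using vertex_char
      by (auto split: if_splits)
  next
    fix P assume "P \<in> insert Tpt {Pb b | b. b \<noteq> 0 \<and> Nm b \<noteq> 1}"
    then consider "P = Tpt" | b where "b \<noteq> 0" "Nm b \<noteq> 1" "P = Pb b" by blast
    then show "P \<in> (\<Union>\<theta>\<in>{\<theta>::'a. \<theta> \<noteq> 0}. vertices q \<theta>)"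
    proof cases
      case 1
      then have "P \<in> vertices q 1" using vertex_char[of 1] by simp
      then show ?thesis by (intro UN_I[of 1]) auto
    next
      case (2 b)
      obtain \<theta> where th: "\<theta> \<noteq> 0" "Nm \<theta> = -1 / Nm b" using Nm_surj[of "-1 / Nm b"] c_ok[of b] 2(1) by blast
      then have "Nm b = -1 / Nm \<theta>" using 2(1) by (simp add: field_simps)
      then have "P \<in> vertices q \<theta>" using vertex_char[OF th(1)] 2 by auto
      then show ?thesis using th(1) by (intro UN_I[of \<theta>]) auto
    qed
  qed
  finally show ?thesis .
qed

lemma main:
  shows "{P \<in> PG. P \<notin> subplane q \<and> \<not> inc P mT \<and>
            (\<exists>\<theta>::'a. \<theta> \<noteq> 0 \<and> projection (subplane q) P = S_set q \<theta>)}
           = insert Tpt {P \<in> Fig q (Tpt::'a trip set). \<not> inc P mT}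
       \<and> card {P \<in> PG. P \<notin> subplane q \<and> \<not> inc P mT \<and>
            (\<exists>\<theta>::'a. \<theta> \<noteq> 0 \<and> projection (subplane q) P = S_set q \<theta>)} = q^3 - q^2 - q - 1
       \<and> (even q \<longrightarrow>
            vertices q (1::'a) = {Tpt}
          \<and> (\<forall>\<theta>::'a. \<theta> \<noteq> 0 \<and> normq q \<theta> \<noteq> 1 \<longrightarrow>
               vertices q \<theta> = Pi_set q \<theta> \<and> card (vertices q \<theta>) = q^2 + q + 1))
       \<and> (odd q \<longrightarrow>
            vertices q (-1::'a) = {}
          \<and> vertices q (1::'a) = insert Tpt (Pi_set q (-1))
          \<and> card (vertices q (1::'a)) = q^2 + q + 2
          \<and> (\<forall>\<theta>::'a. \<theta> \<noteq> 0 \<and> normq q \<theta> \<noteq> 1 \<and> normq q \<theta> \<noteq> -1 \<longrightarrow>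
               vertices q \<theta> = Pi_set q (-\<theta>) \<and> card (vertices q \<theta>) = q^2 + q + 1))"
proof (intro conjI impI allI)
  show "{P \<in> PG. P \<notin> subplane q \<and> \<not> inc P mT \<and>
            (\<exists>\<theta>::'a. \<theta> \<noteq> 0 \<and> projection (subplane q) P = S_set q \<theta>)}
           = insert Tpt {P \<in> Fig q (Tpt::'a trip set). \<not> inc P mT}"
    unfolding LHS_eq Fig_char ..
  have "card (insert Tpt {Pb b | b. b \<noteq> 0 \<and> Nm b \<noteq> 1}) = Suc (card {Pb b | b. b \<noteq> 0 \<and> Nm b \<noteq> 1})"
    by (rule card_insert_disjoint) (use T_ne_Pb Pb_set_finite in blast)+
  moreover have "{Pb b | b. b \<noteq> 0 \<and> Nm b \<noteq> 1} = Pb ` {b. b \<noteq> 0 \<and> Nm b \<noteq> 1}" by auto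
  moreover have "inj_on Pb {b. b \<noteq> 0 \<and> Nm b \<noteq> 1}" using Pb_inj by (auto simp: inj_on_def)
  ultimately have cc: "card (insert Tpt {Pb b | b. b \<noteq> 0 \<and> Nm b \<noteq> 1}) = Suc (q^3 - 1 - (q^2 + q + 1))"
    by (simp add: card_image card_nonnorm1)
  have q2: "q \<ge> 2" by (rule q_ge2)
  have "q^3 \<ge> q^2 + q + 2"
  proof -
    have "q^3 = q * q^2" by (simp add: power3_eq_cube power2_eq_square)
    also have "\<dots> \<ge> 2 * q^2" using q2 by (intro mult_le_mono1) auto
    finally have a: "q^3 \<ge> 2 * q^2" .
    have "q^2 = q * q" by (simp add: power2_eq_square)
    also have "\<dots> \<ge> 2 * q" using q2 by (intro mult_le_mono1) auto
    finally have "q^2 \<ge> 2 * q" .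
    then show ?thesis using a q2 by linarith
  qed
  then have "Suc (q^3 - 1 - (q^2 + q + 1)) = q^3 - q^2 - q - 1" by linarith
  then show "card {P \<in> PG. P \<notin> subplane q \<and> \<not> inc P mT \<and>
            (\<exists>\<theta>::'a. \<theta> \<noteq> 0 \<and> projection (subplane q) P = S_set q \<theta>)} = q^3 - q^2 - q - 1"
    unfolding LHS_eq cc .
next
  assume ev: "even q"
  have "(1::'a) + 1 = 0" using even_char[OF ev] by (simp only: one_add_one)
  then have m1: "(-1::'a) = 1" using eq_neg_iff_add_eq_0[of "1::'a" 1] by simp
  show "vertices q (1::'a) = {Tpt}" using vertex_char[of 1] m1 empty_eq1 by simp
  fix \<theta> :: 'a
  assume th: "\<theta> \<noteq> 0 \<and> normq q \<theta> \<noteq> 1"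
  then have th0: "\<theta> \<noteq> 0" and n1: "Nm \<theta> \<noteq> 1" by (auto simp: normq_Nm)
  have c1: "-1 / Nm \<theta> \<noteq> 1" unfolding m1 using n1 th0 by simp
  have V: "vertices q \<theta> = {Pb b | b. b \<noteq> 0 \<and> Nm b = -1 / Nm \<theta>}"
    using vertex_char[OF th0] n1 drop_ne1[OF c1] by simp
  have "-\<theta> = (-1) * \<theta>" by simp
  also have "\<dots> = \<theta>" unfolding m1 by simp
  finally have "-\<theta> = \<theta>" .
  then have "Pi_set q \<theta> = Pi_set q (-\<theta>)" by (simp only:)
  then show "vertices q \<theta> = Pi_set q \<theta>" using V Pi_neg[OF th0] by simp
  show "card (vertices q \<theta>) = q^2 + q + 1" using V card_Pb_fiber c_ok[OF th0] by simp
next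
  assume od: "odd q"
  have m1: "(-1::'a) \<noteq> 1"
  proof
    assume "(-1::'a) = 1"
    then have "(1::'a) + 1 = 0" using eq_neg_iff_add_eq_0[of "1::'a" 1] by simp
    then show False using odd_char[OF od] by (simp only: one_add_one)
  qed
  have Nm1: "Nm (-1::'a) \<noteq> 1" using m1 by simp
  show "vertices q (-1::'a) = {}" using vertex_char[of "-1"] Nm1 empty_eq1 by simp
  have V1: "vertices q (1::'a) = insert Tpt {Pb b | b. b \<noteq> 0 \<and> Nm b = -1}"
    using vertex_char[of 1] drop_ne1[OF m1] by simp
  show "vertices q (1::'a) = insert Tpt (Pi_set q (-1))" using V1 Pi_neg[of 1] by simp
  have "card (insert Tpt {Pb b | b. b \<noteq> 0 \<and> Nm b = -1}) = Suc (card {Pb b | b. b \<noteq> 0 \<and> Nm b = -1})"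
    by (rule card_insert_disjoint) (use T_ne_Pb Pb_set_finite in blast)+
  then show "card (vertices q (1::'a)) = q^2 + q + 2" using V1 card_Pb_fiber[of "-1"] by simp
  fix \<theta> :: 'a
  assume th: "\<theta> \<noteq> 0 \<and> normq q \<theta> \<noteq> 1 \<and> normq q \<theta> \<noteq> -1"
  then have th0: "\<theta> \<noteq> 0" and n1: "Nm \<theta> \<noteq> 1" and n2: "Nm \<theta> \<noteq> -1" by (auto simp: normq_Nm)
  have c1: "-1 / Nm \<theta> \<noteq> 1" using n2 th0 by (simp add: field_simps)
  have V: "vertices q \<theta> = {Pb b | b. b \<noteq> 0 \<and> Nm b = -1 / Nm \<theta>}"
    using vertex_char[OF th0] n1 drop_ne1[OF c1] by simp
  show "vertices q \<theta> = Pi_set q (-\<theta>)" using V Pi_neg[OF th0] by simp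
  show "card (vertices q \<theta>) = q^2 + q + 1" using V card_Pb_fiber c_ok[OF th0] by simp
qed

end

theorem lemma7p3:
  fixes q :: nat
  assumes "\<exists>p k. prime p \<and> k > 0 \<and> q = p ^ k"
    and "card (UNIV::('a::{field,finite}) set) = q ^ 3"
  shows "{P \<in> PG. P \<notin> subplane q \<and> \<not> inc P mT \<and>
            (\<exists>\<theta>::'a. \<theta> \<noteq> 0 \<and> projection (subplane q) P = S_set q \<theta>)}
           = insert Tpt {P \<in> Fig q (Tpt::'a trip set). \<not> inc P mT}
       \<and> card {P \<in> PG. P \<notin> subplane q \<and> \<not> inc P mT \<and>
            (\<exists>\<theta>::'a. \<theta> \<noteq> 0 \<and> projection (subplane q) P = S_set q \<theta>)} = q^3 - q^2 - q - 1
       \<and> (even q \<longrightarrow>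
            vertices q (1::'a) = {Tpt}
          \<and> (\<forall>\<theta>::'a. \<theta> \<noteq> 0 \<and> normq q \<theta> \<noteq> 1 \<longrightarrow>
               vertices q \<theta> = Pi_set q \<theta> \<and> card (vertices q \<theta>) = q^2 + q + 1))
       \<and> (odd q \<longrightarrow>
            vertices q (-1::'a) = {}
          \<and> vertices q (1::'a) = insert Tpt (Pi_set q (-1))
          \<and> card (vertices q (1::'a)) = q^2 + q + 2
          \<and> (\<forall>\<theta>::'a. \<theta> \<noteq> 0 \<and> normq q \<theta> \<noteq> 1 \<and> normq q \<theta> \<noteq> -1 \<longrightarrow>
               vertices q \<theta> = Pi_set q (-\<theta>) \<and> card (vertices q \<theta>) = q^2 + q + 1))"
proof -
  interpret ff q "TYPE('a)"
    by unfold_locales (use assms in \<open>simp add: FF_def\<close>)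
  show ?thesis by (rule main)
qed

end
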